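(* On $T^*\mathrm{Eng}(n)$, for all $i,j\in\{1,\dots,n\}$ with $i\neq j$ and all $N\in\{1,\dots,n\}$, the functions $L_{ij}$ and $C_N$ are prime integrals of the normal Hamiltonian flow, i.e. $\{L_{ij},H\}=0$ and $\{C_N,H\}=0$.
   Context: $\mathrm{Eng}(n)$ is the simply connected Lie group with Lie algebra basis $X_1,\dots,X_n,Y_0,\dots,Y_{n+1}$ whose only nontrivial brackets (up to antisymmetry) are $[X_i,Y_0]=Y_i$ and $[X_i,Y_i]=Y_{n+1}$, $i=1,\dots,n$; all are viewed as left-invariant vector fields. For a vector field $X$, $P_X\in C^\infty(T^*\mathrm{Eng}(n))$ is $P_X(\lambda)=\langle\lambda,X\rangle$. The normal Hamiltonian is $H=\frac12\big(\sum_{i=1}^nP_{X_i}^2+P_{Y_0}^2\big)$ (the paper's statement is insensitive to the constant factor). Poisson brackets on $T^*\mathrm{Eng}(n)$ (canonical symplectic form) are normalized so that $\{P_X,P_Y\}=P_{[X,Y]}$ for left-invariant $X,Y$. Define $L_{ij}:=P_{X_i}P_{Y_j}-P_{X_j}P_{Y_i}$ and $C_N:=\frac12\sum_{i,j\in\{1,\dots,N\},\,i\neq j}L_{ij}^2$. *)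

theory Defs
  imports "HOL-Analysis.Analysis"
begin

text \<open>A point of the dual (momentum coordinates of a covector lambda in the
  left trivialisation T*Eng(n) = Eng(n) x eng(n)*) is a function
  p :: idx => real with p a = P_a(lambda).\<close>

datatype idx = X nat | Y nat

definition basis :: "nat \<Rightarrow> idx set" where
  "basis n = X ` {1..n} \<union> Y ` {0..n+1}"

text \<open>P_{[a,b]} for basis vectors a, b: the only nontrivial brackets are
  [X i, Y 0] = Y i and [X i, Y i] = Y (n+1), i = 1..n (plus antisymmetry).\<close>

fun lieP :: "nat \<Rightarrow> idx \<Rightarrow> idx \<Rightarrow> (idx \<Rightarrow> real) \<Rightarrow> real" where
  "lieP n (X i) (Y j) p =
     (if 1 \<le> i \<and> i \<le> n \<and> j = 0 then p (Y i)
      else if 1 \<le> i \<and> i \<le> n \<and> j = i then p (Y (n+1)) else 0)"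
| "lieP n (Y j) (X i) p =
     (if 1 \<le> i \<and> i \<le> n \<and> j = 0 then - p (Y i)
      else if 1 \<le> i \<and> i \<le> n \<and> j = i then - p (Y (n+1)) else 0)"
| "lieP n _ _ p = 0"

definition pd :: "((idx \<Rightarrow> real) \<Rightarrow> real) \<Rightarrow> idx \<Rightarrow> (idx \<Rightarrow> real) \<Rightarrow> real" where
  "pd F a p = deriv (\<lambda>t. F (p(a := t))) (p a)"

text \<open>Poisson bracket (canonical symplectic form on T*Eng(n)) of two functions
  depending only on the left-invariant momenta P_a, normalised so that
  {P_a, P_b} = P_{[a,b]}; by the Leibniz rule
  {F,G} = sum_{a,b} dF/dP_a dG/dP_b P_{[a,b]}.\<close>

definition poisson :: "nat \<Rightarrow> ((idx \<Rightarrow> real) \<Rightarrow> real) \<Rightarrow> ((idx \<Rightarrow> real) \<Rightarrow> real)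
    \<Rightarrow> (idx \<Rightarrow> real) \<Rightarrow> real" where
  "poisson n F G p = (\<Sum>a\<in>basis n. \<Sum>b\<in>basis n. pd F a p * pd G b p * lieP n a b p)"

definition Ham :: "nat \<Rightarrow> (idx \<Rightarrow> real) \<Rightarrow> real" where
  "Ham n p = (1/2) * ((\<Sum>i=1..n. (p (X i))^2) + (p (Y 0))^2)"

definition Lij :: "nat \<Rightarrow> nat \<Rightarrow> (idx \<Rightarrow> real) \<Rightarrow> real" where
  "Lij i j p = p (X i) * p (Y j) - p (X j) * p (Y i)"

definition CN :: "nat \<Rightarrow> (idx \<Rightarrow> real) \<Rightarrow> real" where
  "CN N p = (1/2) * (\<Sum>i\<in>{1..N}. \<Sum>j\<in>{1..N} - {i}. (Lij i j p)^2)"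

end

theory Submission
  imports Defs
begin

lemma upd_deriv: "((\<lambda>t. (p(a:=t)) b) has_real_derivative (if b = a then 1 else 0)) (at x)"
  by (cases "b = a") auto

definition gL :: "nat \<Rightarrow> nat \<Rightarrow> (idx \<Rightarrow> real) \<Rightarrow> idx \<Rightarrow> real" where
  "gL i j p a = (if a = X i then p (Y j) else 0) + (if a = Y j then p (X i) else 0)
     - (if a = X j then p (Y i) else 0) - (if a = Y i then p (X j) else 0)"

lemma upd_deriv2: "D = (if b = a then 1 else 0) \<Longrightarrow> ((\<lambda>t. (p(a:=t)) b) has_real_derivative D) (at x)"
  using upd_deriv by simp

lemma Lij_deriv: "((\<lambda>t. Lij i j (p(a:=t))) has_real_derivative gL i j p a) (at (p a))"
  unfolding Lij_def gL_def
  by (rule derivative_eq_intros upd_deriv2 refl)+ (auto simp: algebra_simps)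

lemma pd_Lij: "pd (Lij i j) a p = gL i j p a"
  unfolding pd_def using Lij_deriv DERIV_imp_deriv by blast

definition gH :: "nat \<Rightarrow> (idx \<Rightarrow> real) \<Rightarrow> idx \<Rightarrow> real" where
  "gH n p a = (\<Sum>k=1..n. if a = X k then p (X k) else 0) + (if a = Y 0 then p (Y 0) else 0)"

lemma Ham_deriv: "((\<lambda>t. Ham n (p(a:=t))) has_real_derivative gH n p a) (at (p a))"
  unfolding Ham_def gH_def
  by (rule derivative_eq_intros upd_deriv2 refl)+ (auto simp: algebra_simps sum_distrib_left intro!: sum.cong)

lemma pd_Ham: "pd (Ham n) a p = gH n p a"
  unfolding pd_def using Ham_deriv DERIV_imp_deriv by blast

definition gC :: "nat \<Rightarrow> (idx \<Rightarrow> real) \<Rightarrow> idx \<Rightarrow> real" where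
  "gC N p a = (\<Sum>i\<in>{1..N}. \<Sum>j\<in>{1..N} - {i}. Lij i j p * gL i j p a)"

lemma Lij_deriv2: "D = gL i j p a \<Longrightarrow> x = p a \<Longrightarrow> ((\<lambda>t. Lij i j (p(a:=t))) has_real_derivative D) (at x)"
  using Lij_deriv by simp

lemma CN_deriv: "((\<lambda>t. CN N (p(a:=t))) has_real_derivative gC N p a) (at (p a))"
  unfolding CN_def gC_def
  by (rule derivative_eq_intros Lij_deriv2 refl)+ (auto simp: algebra_simps sum_distrib_left intro!: sum.cong)

lemma pd_CN: "pd (CN N) a p = gC N p a"
  unfolding pd_def using CN_deriv DERIV_imp_deriv by blast

definition V :: "nat \<Rightarrow> (idx \<Rightarrow> real) \<Rightarrow> idx \<Rightarrow> real" where
  "V n p a = (\<Sum>b\<in>basis n. gH n p b * lieP n a b p)"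

lemma poisson_Ham: "poisson n F (Ham n) p = (\<Sum>a\<in>basis n. pd F a p * V n p a)"
  unfolding poisson_def V_def pd_Ham by (simp add: sum_distrib_left mult.assoc)

lemma sum_basis: "(\<Sum>b\<in>basis n. f b) = (\<Sum>k=1..n. f (X k)) + (\<Sum>k=0..n+1. f (Y k))"
proof -
  have "(\<Sum>b\<in>basis n. f b) = sum f (X ` {1..n}) + sum f (Y ` {0..n+1})"
    unfolding basis_def by (rule sum.union_disjoint) auto
  also have "\<dots> = (\<Sum>k=1..n. f (X k)) + (\<Sum>k=0..n+1. f (Y k))"
    by (simp add: sum.reindex inj_on_def)
  finally show ?thesis .
qed

lemma gH_X: "gH n p (X k) = (if 1 \<le> k \<and> k \<le> n then p (X k) else 0)"
proof -
  have "(\<Sum>m=1..n. if X k = X m then p (X m) else 0) = (\<Sum>m\<in>{1..n}. if k = m then p (X k) else 0)"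
    by (rule sum.cong) auto
  then show ?thesis unfolding gH_def by simp
qed

lemma gH_Y: "gH n p (Y k) = (if k = 0 then p (Y 0) else 0)"
  unfolding gH_def by simp

lemma V_X: "1 \<le> k \<Longrightarrow> k \<le> n \<Longrightarrow> V n p (X k) = p (Y 0) * p (Y k)"
proof -
  assume h: "1 \<le> k" "k \<le> n"
  have "(\<Sum>ka = 0..n. (if ka = 0 then p (Y 0) else 0) *
            (if ka = 0 then p (Y k) else if 1 \<le> k \<and> k \<le> n \<and> ka = k then p (Y (n + 1)) else 0))
      = (\<Sum>ka \<in> {0..n}. if ka = 0 then p (Y 0) * p (Y k) else 0)"
    by (rule sum.cong) auto
  then show ?thesis using h unfolding V_def sum_basis gH_Y by simp
qed

lemma V_Y: "1 \<le> k \<Longrightarrow> k \<le> n \<Longrightarrow> V n p (Y k) = - p (X k) * p (Y (n+1))"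
proof -
  assume h: "1 \<le> k" "k \<le> n"
  have "(\<Sum>ka = Suc 0..n. p (X ka) * (if k = ka then - p (Y (n + 1)) else 0))
      = (\<Sum>ka \<in> {Suc 0..n}. if k = ka then - p (X k) * p (Y (n + 1)) else 0)"
    by (rule sum.cong) auto
  then show ?thesis using h unfolding V_def sum_basis gH_X by simp
qed

lemma sum_delta_basis: "x \<in> basis n \<Longrightarrow> (\<Sum>a\<in>basis n. (if a = x then c else 0) * f a) = (c::real) * f x"
proof -
  assume h: "x \<in> basis n"
  have "(\<Sum>a\<in>basis n. (if a = x then c else 0) * f a) = (\<Sum>a\<in>basis n. if a = x then c * f x else 0)"
    by (rule sum.cong) auto
  also have "\<dots> = c * f x" using h by (simp add: basis_def)
  finally show ?thesis .
qed

lemma poisson_Lij: "1 \<le> i \<Longrightarrow> i \<le> n \<Longrightarrow> 1 \<le> j \<Longrightarrow> j \<le> n \<Longrightarrow>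
  poisson n (Lij i j) (Ham n) p = 0"
proof -
  assume h: "1 \<le> i" "i \<le> n" "1 \<le> j" "j \<le> n"
  have m: "X i \<in> basis n" "X j \<in> basis n" "Y i \<in> basis n" "Y j \<in> basis n"
    using h by (auto simp: basis_def)
  have "poisson n (Lij i j) (Ham n) p = (\<Sum>a\<in>basis n. gL i j p a * V n p a)"
    by (simp add: poisson_Ham pd_Lij)
  also have "\<dots> = p (Y j) * V n p (X i) + p (X i) * V n p (Y j) - p (Y i) * V n p (X j) - p (X j) * V n p (Y i)"
    unfolding gL_def by (simp only: ring_distribs sum.distrib sum_subtractf sum_delta_basis[OF m(1)]
       sum_delta_basis[OF m(2)] sum_delta_basis[OF m(3)] sum_delta_basis[OF m(4)])
  also have "\<dots> = 0" using h by (simp add: V_X V_Y algebra_simps)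
  finally show ?thesis .
qed

lemma poisson_CN: "N \<le> n \<Longrightarrow> poisson n (CN N) (Ham n) p = 0"
proof -
  assume h: "N \<le> n"
  have "poisson n (CN N) (Ham n) p = (\<Sum>a\<in>basis n. gC N p a * V n p a)"
    by (simp add: poisson_Ham pd_CN)
  also have "\<dots> = (\<Sum>i\<in>{1..N}. \<Sum>j\<in>{1..N} - {i}. Lij i j p * (\<Sum>a\<in>basis n. gL i j p a * V n p a))"
    unfolding gC_def by (simp add: sum_distrib_left sum_distrib_right mult.assoc sum.swap[of _ "basis n"])
  also have "\<dots> = (\<Sum>i\<in>{1..N}. \<Sum>j\<in>{1..N} - {i}. Lij i j p * poisson n (Lij i j) (Ham n) p)"
    by (simp add: poisson_Ham pd_Lij)
  also have "\<dots> = 0" using h by (auto intro!: sum.neutral simp: poisson_Lij)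
  finally show ?thesis .
qed

theorem lemma7:
  fixes n i j N :: nat
  assumes "i \<in> {1..n}" and "j \<in> {1..n}" and "i \<noteq> j" and "N \<in> {1..n}"
  shows "(\<forall>p. poisson n (Lij i j) (Ham n) p = 0) \<and> (\<forall>p. poisson n (CN N) (Ham n) p = 0)"
  using assms poisson_Lij poisson_CN by auto

end
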